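(* Let $t \geq 4$ be an integer and let $G$ be a finite, simple, connected graph that contains no hole of length at least $t$. Then $t-3$ cops have a winning strategy in the game of cops and robbers on $G$; that is, $c(G) \leq t-3$.
   Context: A hole in a graph is an induced cycle of length at least $4$. The game of cops and robbers on a graph $G$ with $k$ cops is played as follows: each cop chooses a starting vertex, then the single robber chooses a starting vertex; then the players alternate turns, starting with the cops. On the cops' turn, each cop either stays on its vertex or moves to an adjacent vertex; on the robber's turn, the robber stays on his vertex or moves to an adjacent vertex. Both sides have full information. The cops win if at some point a cop occupies the same vertex as the robber; the robber wins if he avoids capture forever. The cop number $c(G)$ is the minimum $k$ such that $k$ cops have a winning strategy on $G$. All graphs are finite, simple and connected. *)

theory Defs
  imports Main
begin

definition finite_simple_graph :: "'a set \<Rightarrow> ('a \<Rightarrow> 'a \<Rightarrow> bool) \<Rightarrow> bool" where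
  "finite_simple_graph V E \<longleftrightarrow> finite V \<and> V \<noteq> {} \<and>
     (\<forall>x y. E x y \<longrightarrow> x \<in> V \<and> y \<in> V) \<and>
     (\<forall>x y. E x y \<longrightarrow> E y x) \<and> (\<forall>x. \<not> E x x)"

definition connected_graph :: "'a set \<Rightarrow> ('a \<Rightarrow> 'a \<Rightarrow> bool) \<Rightarrow> bool" where
  "connected_graph V E \<longleftrightarrow> (\<forall>u\<in>V. \<forall>v\<in>V. E\<^sup>*\<^sup>* u v)"

text \<open>A hole: an induced cycle of length at least 4, given as the cyclic list of its
(distinct) vertices; two vertices of the list are adjacent iff they are cyclically
consecutive.\<close>

definition hole :: "'a set \<Rightarrow> ('a \<Rightarrow> 'a \<Rightarrow> bool) \<Rightarrow> 'a list \<Rightarrow> bool" where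
  "hole V E vs \<longleftrightarrow> length vs \<ge> 4 \<and> distinct vs \<and> set vs \<subseteq> V \<and>
     (\<forall>i<length vs. \<forall>j<length vs.
        E (vs ! i) (vs ! j) \<longleftrightarrow> (j = Suc i mod length vs \<or> i = Suc j mod length vs))"

text \<open>A cop configuration is a list of the cops' positions
(one entry per cop). A cop strategy consists of an initial placement and a function
which, given the history of cop configurations C_0..C_n and robber positions R_0..R_n,
returns the next cop configuration C_{n+1}. Play order: C_0, R_0, C_1, R_1, ...\<close>

definition cop_step :: "('a \<Rightarrow> 'a \<Rightarrow> bool) \<Rightarrow> 'a list \<Rightarrow> 'a list \<Rightarrow> bool" where
  "cop_step E c c' \<longleftrightarrow> length c' = length c \<and>
     (\<forall>i<length c. c' ! i = c ! i \<or> E (c ! i) (c' ! i))"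

definition robber_walk :: "'a set \<Rightarrow> ('a \<Rightarrow> 'a \<Rightarrow> bool) \<Rightarrow> (nat \<Rightarrow> 'a) \<Rightarrow> bool" where
  "robber_walk V E R \<longleftrightarrow> R 0 \<in> V \<and> (\<forall>n. R (Suc n) = R n \<or> E (R n) (R (Suc n)))"

primrec cop_hist :: "'a list \<Rightarrow> ('a list list \<Rightarrow> 'a list \<Rightarrow> 'a list) \<Rightarrow> (nat \<Rightarrow> 'a) \<Rightarrow> nat \<Rightarrow> 'a list list" where
  "cop_hist C0 f R 0 = [C0]"
| "cop_hist C0 f R (Suc n) = cop_hist C0 f R n @ [f (cop_hist C0 f R n) (map R [0..<Suc n])]"

definition cop_pos :: "'a list \<Rightarrow> ('a list list \<Rightarrow> 'a list \<Rightarrow> 'a list) \<Rightarrow> (nat \<Rightarrow> 'a) \<Rightarrow> nat \<Rightarrow> 'a list" where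
  "cop_pos C0 f R n = cop_hist C0 f R n ! n"

text \<open>k cops have a winning strategy: there is a legal strategy for k cops such that,
against every legal robber behaviour (start vertex and moves, chosen with full
information), the robber is caught at some point (after a robber move/start, or
after a cop move).\<close>

definition cops_win :: "'a set \<Rightarrow> ('a \<Rightarrow> 'a \<Rightarrow> bool) \<Rightarrow> nat \<Rightarrow> bool" where
  "cops_win V E k \<longleftrightarrow> (\<exists>C0 f. length C0 = k \<and> set C0 \<subseteq> V \<and>
     (\<forall>R. robber_walk V E R \<longrightarrow>
        (\<forall>n. cop_step E (cop_pos C0 f R n) (cop_pos C0 f R (Suc n))) \<and>
        (\<exists>n. R n \<in> set (cop_pos C0 f R n) \<or> R n \<in> set (cop_pos C0 f R (Suc n)))))"

definition cop_number :: "'a set \<Rightarrow> ('a \<Rightarrow> 'a \<Rightarrow> bool) \<Rightarrow> nat" where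
  "cop_number V E = (LEAST k. cops_win V E k)"

end

theory Submission
  imports Defs
begin

lemma hist_len: "length (cop_hist C0 f R n) = Suc n"
  by (induction n) auto

lemma cop_pos_Suc: "cop_pos C0 f R (Suc n) = f (cop_hist C0 f R n) (map R [0..<Suc n])"
  unfolding cop_pos_def using hist_len[of C0 f R n] by (simp add: nth_append)

lemma last_hist: "last (cop_hist C0 f R n) = cop_pos C0 f R n"
proof -
  have "cop_hist C0 f R n \<noteq> []" using hist_len[of C0 f R n] by auto
  then show ?thesis unfolding cop_pos_def using hist_len[of C0 f R n] by (simp add: last_conv_nth)
qed

locale grph =
  fixes V :: "'a set" and E :: "'a \<Rightarrow> 'a \<Rightarrow> bool" and k :: nat
  assumes fsg: "finite_simple_graph V E" and conn: "connected_graph V E"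
    and k1: "1 \<le> k" and nohole: "\<And>vs. hole V E vs \<Longrightarrow> length vs < k + 3"
begin

lemma sym: "E x y \<Longrightarrow> E y x" using fsg unfolding finite_simple_graph_def by blast
lemma irr: "\<not> E x x" using fsg unfolding finite_simple_graph_def by blast
lemma inV: "E x y \<Longrightarrow> x \<in> V \<and> y \<in> V" using fsg unfolding finite_simple_graph_def by blast
lemma finV: "finite V" using fsg unfolding finite_simple_graph_def by blast
lemma symI: "E x y = E y x" using sym by blast

definition ipath :: "'a list \<Rightarrow> bool" where
  "ipath Q \<longleftrightarrow> distinct Q \<and> (\<forall>i<length Q. \<forall>l<length Q. E (Q!i) (Q!l) \<longleftrightarrow> (l = Suc i \<or> i = Suc l))"

lemma glue_hole:
  assumes P: "ipath P" and Q: "ipath Q" and dj: "set P \<inter> set Q = {}" and p3: "length P \<ge> 3"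
    and qn: "Q \<noteq> []" and sv: "set P \<subseteq> V" "set Q \<subseteq> V"
    and cr: "\<And>a c. a < length P \<Longrightarrow> c < length Q \<Longrightarrow>
       E (P!a) (Q!c) \<longleftrightarrow> ((a = length P - 1 \<and> c = 0) \<or> (a = 0 \<and> c = length Q - 1))"
  shows "hole V E (P @ Q)"
proof -
  define p where "p = length P"
  define q where "q = length Q"
  have q1: "q \<ge> 1" using qn q_def by (cases Q) auto
  have L: "length (P @ Q) = p + q" by (simp add: p_def q_def)
  have modS: "\<And>x. x < p + q \<Longrightarrow> Suc x mod (p + q) = (if Suc x = p + q then 0 else Suc x)"
    by auto
  have adj: "E ((P @ Q) ! i) ((P @ Q) ! l) \<longleftrightarrow> (l = Suc i mod (p+q) \<or> i = Suc l mod (p+q))"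
    if il: "i < p + q" "l < p + q" for i l
  proof -
    consider "i < p" "l < p" | "i < p" "l \<ge> p" | "i \<ge> p" "l < p" | "i \<ge> p" "l \<ge> p" by linarith
    then show ?thesis
    proof cases
      case 1
      then show ?thesis using P unfolding ipath_def using modS il p3 q1
        by (simp add: nth_append p_def)
    next
      case 2
      have "E ((P @ Q) ! i) ((P @ Q) ! l) = E (P!i) (Q!(l-p))" using 2 by (simp add: nth_append p_def)
      also have "\<dots> \<longleftrightarrow> ((i = p - 1 \<and> l - p = 0) \<or> (i = 0 \<and> l - p = q - 1))"
        using cr[of i "l-p"] 2 il by (simp add: p_def q_def)
      finally show ?thesis using 2 il modS p3 q1 by (auto simp: p_def)
    next
      case 3
      have "E ((P @ Q) ! i) ((P @ Q) ! l) = E (P!l) (Q!(i-p))" using 3 symI by (simp add: nth_append p_def)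
      also have "\<dots> \<longleftrightarrow> ((l = p - 1 \<and> i - p = 0) \<or> (l = 0 \<and> i - p = q - 1))"
        using cr[of l "i-p"] 3 il by (simp add: p_def q_def)
      finally show ?thesis using 3 il modS p3 q1 by (auto simp: p_def)
    next
      case 4
      have "E ((P @ Q) ! i) ((P @ Q) ! l) = E (Q!(i-p)) (Q!(l-p))" using 4 by (simp add: nth_append p_def)
      also have "\<dots> \<longleftrightarrow> (l - p = Suc (i - p) \<or> i - p = Suc (l - p))"
        using Q 4 il unfolding ipath_def q_def by auto
      finally show ?thesis using 4 il modS p3 q1 by (auto simp: p_def)
    qed
  qed
  show ?thesis unfolding hole_def L
    using adj P Q dj sv p3 q1 unfolding ipath_def by (auto simp: p_def)
qed

lemma walk_exists:
  assumes "(\<lambda>u v. E u v \<and> u \<notin> X \<and> v \<notin> X)\<^sup>*\<^sup>* x z" "x \<notin> X"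
  shows "\<exists>w. w \<noteq> [] \<and> hd w = x \<and> last w = z \<and> successively E w \<and> set w \<inter> X = {}"
  using assms
proof (induction rule: converse_rtranclp_induct)
  case base
  then show ?case by (intro exI[of _ "[z]"]) auto
next
  case (step y u)
  then obtain w where w: "w \<noteq> []" "hd w = u" "last w = z" "successively E w" "set w \<inter> X = {}" by blast
  show ?case using step w by (intro exI[of _ "y # w"]) (auto simp: successively_Cons)
qed

lemma succ_take: "successively R xs \<Longrightarrow> successively R (take n xs)"
  by (simp add: successively_conv_nth)
lemma succ_drop: "successively R xs \<Longrightarrow> successively R (drop n xs)"
  by (simp add: successively_conv_nth)
lemma last_take_nth: "0 < i \<Longrightarrow> i \<le> length xs \<Longrightarrow> last (take i xs) = xs ! (i - 1)"
proof -
  assume a: "0 < i" "i \<le> length xs"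
  then have "take i xs \<noteq> []" by (cases xs) auto
  then show ?thesis using a by (simp add: last_conv_nth min_def)
qed

lemma short_path:
  assumes W: "successively E W" "W \<noteq> []" "hd W = b" "last W = y" "set W \<subseteq> A \<union> {b,y}"
    and byn: "b \<noteq> y" "\<not> E b y"
  shows "\<exists>P. ipath P \<and> hd P = b \<and> last P = y \<and> length P \<ge> 3 \<and> set P \<subseteq> A \<union> {b,y} \<and>
           (\<forall>a. 0 < a \<and> a < length P - 1 \<longrightarrow> P!a \<in> A)"
proof -
  define good where "good P \<longleftrightarrow> successively E P \<and> P \<noteq> [] \<and> hd P = b \<and> last P = y \<and> set P \<subseteq> A \<union> {b,y}" for P
  have "good W" using W good_def by blast
  from ex_has_least_nat[of good W length, OF this] obtain P where
    P: "good P" and min: "\<And>P'. good P' \<Longrightarrow> length P \<le> length P'" by blast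
  have Ps: "successively E P" "P \<noteq> []" "hd P = b" "last P = y" "set P \<subseteq> A \<union> {b,y}"
    using P good_def by auto
  have P0: "P ! 0 = b" using Ps by (simp add: hd_conv_nth)
  have PL: "P ! (length P - 1) = y" using Ps by (simp add: last_conv_nth)
  have S1: False if "i < l" "l < length P" "P!i = P!l" for i l
  proof -
    define P' where "P' = take i P @ drop l P"
    have len: "length P' < length P" using that by (simp add: P'_def)
    have "good P'"
    proof -
      have dne: "drop l P \<noteq> []" using that by simp
      have hdd: "hd (drop l P) = P!l" using that by (simp add: hd_drop_conv_nth)
      have "successively E P'"
      proof (cases "i = 0")
        case True then show ?thesis using Ps by (simp add: P'_def succ_drop)
      next
        case False
        have "last (take i P) = P ! (i - 1)" using False that by (simp add: last_take_nth)
        moreover have "E (P ! (i - 1)) (P ! i)" using successively_nth[OF Ps(1), of "i - 1"] False that by simp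
        ultimately show ?thesis using Ps that False dne hdd
          by (auto simp: P'_def successively_append_iff succ_take succ_drop)
      qed
      moreover have "hd P' = b"
      proof (cases "i = 0")
        case True then show ?thesis using hdd that P0 by (simp add: P'_def)
      next
        case False then show ?thesis using Ps that by (cases P) (auto simp: P'_def)
      qed
      moreover have "last P' = y" using dne Ps that by (simp add: P'_def)
      moreover have "set P' \<subseteq> set P" unfolding P'_def using set_take_subset set_drop_subset by fastforce
      ultimately show ?thesis using Ps dne unfolding good_def P'_def by auto
    qed
    then show False using min len by fastforce
  qed
  have S2: False if "Suc i < l" "l < length P" "E (P!i) (P!l)" for i l
  proof -
    define P' where "P' = take (Suc i) P @ drop l P"
    have len: "length P' < length P" using that by (simp add: P'_def)
    have "good P'"
    proof -
      have dne: "drop l P \<noteq> []" using that by simp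
      have hdd: "hd (drop l P) = P!l" using that by (simp add: hd_drop_conv_nth)
      have "last (take (Suc i) P) = P ! i" using that by (simp add: last_take_nth)
      then have "successively E P'"
        using Ps that dne hdd
        by (auto simp: P'_def successively_append_iff succ_take succ_drop)
      moreover have "hd P' = b" using Ps that by (cases P) (auto simp: P'_def)
      moreover have "last P' = y" using dne Ps that by (simp add: P'_def)
      moreover have "set P' \<subseteq> set P" unfolding P'_def using set_take_subset set_drop_subset by fastforce
      ultimately show ?thesis using Ps dne unfolding good_def P'_def by auto
    qed
    then show False using min len by fastforce
  qed
  have dist: "distinct P"
    unfolding distinct_conv_nth
  proof (intro allI impI)
    fix i l assume "i < length P" "l < length P" "i \<noteq> l"
    then show "P ! i \<noteq> P ! l" using S1[of i l] S1[of l i] by (cases "i < l") auto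
  qed
  have adj: "E (P!i) (P!l) \<longleftrightarrow> (l = Suc i \<or> i = Suc l)" if "i < length P" "l < length P" for i l
  proof
    assume e: "E (P!i) (P!l)"
    show "l = Suc i \<or> i = Suc l"
    proof (rule ccontr)
      assume n: "\<not> (l = Suc i \<or> i = Suc l)"
      consider "i = l" | "Suc i < l" | "Suc l < i" using n by linarith
      then show False
      proof cases
        case 1 then show ?thesis using e irr by simp
      next
        case 2 then show ?thesis using S2[of i l] e that by simp
      next
        case 3 then show ?thesis using S2[of l i] e that sym by simp
      qed
    qed
  next
    assume "l = Suc i \<or> i = Suc l"
    then show "E (P!i) (P!l)" using successively_nth[OF Ps(1)] that sym by auto
  qed
  have ip: "ipath P" unfolding ipath_def using dist adj by blast
  have l2: "length P \<ge> 2"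
  proof (rule ccontr)
    assume "\<not> length P \<ge> 2"
    moreover have "length P \<noteq> 0" using Ps by simp
    ultimately have "length P = 1" by linarith
    then show False using P0 PL byn by simp
  qed
  have l3: "length P \<ge> 3"
  proof (rule ccontr)
    assume "\<not> length P \<ge> 3"
    then have "length P = 2" using l2 by simp
    then show False using P0 PL byn successively_nth[OF Ps(1), of 0] by simp
  qed
  have int: "P!a \<in> A" if "0 < a" "a < length P - 1" for a
  proof -
    have "P!a \<noteq> b" using nth_eq_iff_index_eq[OF dist, of a 0] P0 that Ps(2) by auto
    moreover have "P!a \<noteq> y" using nth_eq_iff_index_eq[OF dist, of a "length P - 1"] PL that by simp
    moreover have "P!a \<in> set P" using that by simp
    ultimately show ?thesis using Ps by auto
  qed
  show ?thesis using ip Ps l3 int by blast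
qed

definition NS :: "'a set \<Rightarrow> 'a set" where
  "NS S = S \<union> {x. \<exists>s\<in>S. E s x}"
definition Rs :: "'a set \<Rightarrow> 'a \<Rightarrow> 'a \<Rightarrow> bool" where
  "Rs S = (\<lambda>u v. E u v \<and> u \<notin> NS S \<and> v \<notin> NS S)"
definition comp :: "'a set \<Rightarrow> 'a \<Rightarrow> 'a set" where
  "comp S r = {x. (Rs S)\<^sup>*\<^sup>* r x}"
definition bd :: "'a set \<Rightarrow> 'a \<Rightarrow> 'a set" where
  "bd S r = {y. y \<notin> comp S r \<and> (\<exists>x\<in>comp S r. E x y)}"

lemma NS_mono: "S \<subseteq> S' \<Longrightarrow> NS S \<subseteq> NS S'"
  unfolding NS_def by blast

lemma comp_r: "r \<in> comp S r" unfolding comp_def by simp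

lemma comp_out: assumes "r \<notin> NS S" "x \<in> comp S r" shows "x \<notin> NS S"
proof -
  have "(Rs S)\<^sup>*\<^sup>* r x" using assms comp_def by simp
  then show ?thesis using assms(1)
    by (cases rule: rtranclp.cases) (auto simp: Rs_def)
qed

lemma comp_fin: assumes "r \<in> V" shows "finite (comp S r)"
proof -
  have "comp S r \<subseteq> V"
  proof
    fix x assume "x \<in> comp S r"
    then have "(Rs S)\<^sup>*\<^sup>* r x" by (simp add: comp_def)
    then show "x \<in> V" using assms
      by (cases rule: rtranclp.cases) (auto simp: Rs_def dest: inV)
  qed
  then show ?thesis using finV finite_subset by blast
qed

lemma bd_NS: assumes "r \<notin> NS S" "y \<in> bd S r" shows "y \<in> NS S" "y \<notin> S"
proof -
  obtain x where x: "x \<in> comp S r" "E x y" "y \<notin> comp S r" using assms bd_def by blast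
  have xo: "x \<notin> NS S" using comp_out assms x by blast
  show "y \<in> NS S"
  proof (rule ccontr)
    assume "y \<notin> NS S"
    then have "Rs S x y" using x xo Rs_def by simp
    then have "y \<in> comp S r" using x unfolding comp_def
      by (simp add: rtranclp.rtrancl_into_rtrancl)
    then show False using x by simp
  qed
  show "y \<notin> S"
  proof
    assume "y \<in> S" then have "x \<in> NS S" using x sym unfolding NS_def by blast
    then show False using xo by simp
  qed
qed

lemma comp_sub:
  assumes r: "r \<notin> NS S" and B: "bd S r \<subseteq> NS S'" and r': "r' = r \<or> E r r'" "r' \<notin> NS S'"
  shows "comp S' r' \<subseteq> comp S r"
proof -
  have r'C: "r' \<in> comp S r"
  proof (cases "r' = r")
    case True then show ?thesis by (simp add: comp_r)
  next
    case False
    then have "E r r'" using r' by simp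
    show ?thesis
    proof (rule ccontr)
      assume "r' \<notin> comp S r"
      then have "r' \<in> bd S r" using \<open>E r r'\<close> comp_r unfolding bd_def by blast
      then show False using B r' by blast
    qed
  qed
  show ?thesis
  proof
    fix x assume "x \<in> comp S' r'"
    then have "(Rs S')\<^sup>*\<^sup>* r' x" by (simp add: comp_def)
    then show "x \<in> comp S r"
    proof (induction rule: rtranclp_induct)
      case base then show ?case using r'C .
    next
      case (step y z)
      then have "E y z" "z \<notin> NS S'" by (auto simp: Rs_def)
      show ?case
      proof (rule ccontr)
        assume "z \<notin> comp S r"
        then have "z \<in> bd S r" using step \<open>E y z\<close> unfolding bd_def by blast
        then show False using B \<open>z \<notin> NS S'\<close> by blast
      qed
    qed
  qed
qed

lemma comp_psub:
  assumes r: "r \<notin> NS S" and B: "bd S r \<subseteq> NS S'" and r': "r' = r \<or> E r r'" "r' \<notin> NS S'"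
    and x: "x \<in> comp S r" "x \<in> NS S'"
  shows "comp S' r' \<subset> comp S r"
  using comp_sub[OF assms(1-4)] comp_out[OF r'(2), of x] x by blast

lemma exit_lemma: "E\<^sup>*\<^sup>* x z \<Longrightarrow> x \<in> C \<Longrightarrow> z \<notin> C \<Longrightarrow> \<exists>u\<in>C. \<exists>w. E u w \<and> w \<notin> C"
  by (induction rule: rtranclp_induct) auto

lemma bd_ne: assumes "r \<notin> NS S" "s \<in> S" "s \<in> V" "r \<in> V" shows "bd S r \<noteq> {}"
proof -
  have "E\<^sup>*\<^sup>* r s" using conn assms unfolding connected_graph_def by blast
  moreover have "s \<notin> comp S r" using comp_out[OF assms(1)] assms(2) NS_def by blast
  ultimately obtain u w where "u \<in> comp S r" "E u w" "w \<notin> comp S r"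
    using exit_lemma comp_r by metis
  then show ?thesis unfolding bd_def by blast
qed

definition enc :: "'a list \<Rightarrow> 'a list" where
  "enc Q = map (\<lambda>i. Q ! min i (length Q - 1)) [0..<k]"

lemma set_enc: assumes "Q \<noteq> []" "length Q \<le> k" shows "set (enc Q) = set Q"
proof
  have "\<And>i. min i (length Q - 1) < length Q" using assms(1) by (cases Q) auto
  then show "set (enc Q) \<subseteq> set Q" unfolding enc_def by auto
  show "set Q \<subseteq> set (enc Q)"
  proof
    fix x assume "x \<in> set Q"
    then obtain i where i: "i < length Q" "Q ! i = x" by (auto simp: in_set_conv_nth)
    have "min i (length Q - 1) = i" using i by simp
    then have "enc Q ! i = x" using assms i unfolding enc_def by simp
    moreover have "i < length (enc Q)" using i assms by (simp add: enc_def)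
    ultimately show "x \<in> set (enc Q)" by (metis nth_mem)
  qed
qed

definition Inv :: "'a list \<Rightarrow> 'a \<Rightarrow> bool" where
  "Inv c r \<longleftrightarrow> (\<exists>Q. Q \<noteq> [] \<and> length Q \<le> k \<and> ipath Q \<and> set Q \<subseteq> V \<and> c = enc Q \<and>
      r \<in> V \<and> r \<notin> NS (set Q))"

definition mu :: "'a list \<Rightarrow> 'a \<Rightarrow> nat" where
  "mu c r = (k + 1) * card (comp (set c) r) + card (set c)"

definition good :: "'a list \<Rightarrow> 'a \<Rightarrow> 'a list \<Rightarrow> bool" where
  "good c r c' \<longleftrightarrow> cop_step E c c' \<and>
     (\<forall>r'. (r' = r \<or> E r r') \<longrightarrow> r' \<notin> NS (set c') \<longrightarrow> Inv c' r' \<and> mu c' r' < mu c r)"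

lemma ipath_snoc:
  assumes "ipath Q" "b \<notin> set Q" "Q \<noteq> [] \<longrightarrow> E (last Q) b" "\<And>i. Suc i < length Q \<Longrightarrow> \<not> E (Q!i) b"
  shows "ipath (Q @ [b])"
proof -
  have lq: "Q \<noteq> [] \<Longrightarrow> E (Q ! (length Q - 1)) b" using assms(3) by (simp add: last_conv_nth)
  have a: "E ((Q@[b])!i) ((Q@[b])!l) \<longleftrightarrow> (l = Suc i \<or> i = Suc l)"
    if "i < Suc (length Q)" "l < Suc (length Q)" for i l
  proof -
    have "i < length Q \<or> i = length Q" "l < length Q \<or> l = length Q" using that by auto
    then consider "i < length Q" "l < length Q" | "i < length Q" "l = length Q"
      | "i = length Q" "l < length Q" | "i = length Q" "l = length Q" by blast
    then show ?thesis
    proof cases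
      case 1 then show ?thesis using assms(1) unfolding ipath_def by (simp add: nth_append)
    next
      case 2 show ?thesis
      proof (cases "Suc i = length Q")
        case True then have "i = length Q - 1" "Q \<noteq> []" by auto
        then show ?thesis using lq 2 by (simp add: nth_append)
      next
        case False then show ?thesis using assms(4)[of i] 2 by (auto simp: nth_append)
      qed
    next
      case 3 show ?thesis
      proof (cases "Suc l = length Q")
        case True then have "l = length Q - 1" "Q \<noteq> []" by auto
        then show ?thesis using lq 3 symI by (simp add: nth_append)
      next
        case False then show ?thesis using assms(4)[of l] 3 symI by (auto simp: nth_append)
      qed
    next
      case 4 then show ?thesis using irr by simp
    qed
  qed
  show ?thesis using assms(1,2) a unfolding ipath_def by auto
qed

lemma ipath_take: "ipath Q \<Longrightarrow> ipath (take m Q)"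
  unfolding ipath_def by auto

lemma ipath_drop: assumes "ipath Q" shows "ipath (drop m Q)"
  unfolding ipath_def
proof (intro conjI allI impI)
  show "distinct (drop m Q)" using assms ipath_def by simp
  fix i l assume il: "i < length (drop m Q)" "l < length (drop m Q)"
  have "E (Q!(m+i)) (Q!(m+l)) = (m+l = Suc (m+i) \<or> m+i = Suc (m+l))"
    using assms il unfolding ipath_def by auto
  then show "E (drop m Q ! i) (drop m Q ! l) = (l = Suc i \<or> i = Suc l)" using il by simp
qed

lemma ipath_tl: "ipath Q \<Longrightarrow> ipath (tl Q)"
  using ipath_drop[of Q 1] by (simp add: drop_Suc)

lemma arith1: "Suc a \<le> b \<Longrightarrow> (1::nat) \<le> k \<Longrightarrow> j' \<le> j + 1 \<Longrightarrow> (k+1)*a + j' < (k+1)*b + j"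
proof -
  assume h: "Suc a \<le> b" "1 \<le> k" "j' \<le> j + 1"
  have "(k+1) * Suc a \<le> (k+1) * b" using h(1) by (rule mult_le_mono2)
  then show ?thesis using h by simp
qed

lemma arith2: "a \<le> b \<Longrightarrow> j' < (j::nat) \<Longrightarrow> (k+1)*a + j' < (k+1)*b + j"
proof -
  assume h: "a \<le> b" "j' < j"
  have "(k+1) * a \<le> (k+1) * b" using h(1) by (rule mult_le_mono2)
  then show ?thesis using h by simp
qed

lemma key:
  assumes "Inv c r" shows "\<exists>c'. good c r c'"
proof -
  obtain Q where Q: "Q \<noteq> []" "length Q \<le> k" "ipath Q" "set Q \<subseteq> V" "c = enc Q" "r \<in> V" "r \<notin> NS (set Q)"
    using assms Inv_def by blast
  define j where "j = length Q"
  define S where "S = set Q"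
  define C where "C = comp S r"
  define B where "B = bd S r"
  have j1: "j \<ge> 1" using Q j_def by (cases Q) auto
  have jk: "j \<le> k" using Q j_def by simp
  have rS: "r \<notin> NS S" using Q S_def by simp
  have setc: "set c = S" using set_enc Q S_def by simp
  have dQ: "distinct Q" using Q ipath_def by simp
  have cardS: "card S = j" using dQ S_def j_def distinct_card by blast
  have finC: "finite C" using comp_fin Q C_def by blast
  have cnth: "c ! i = Q ! min i (j - 1)" if "i < k" for i using that Q j_def by (simp add: enc_def)
  have lenc: "length c = k" using Q by (simp add: enc_def)
  have Qadj: "E (Q!i) (Q!Suc i)" if "Suc i < j" for i using Q(3) that j_def unfolding ipath_def by auto
  have Badj: "\<exists>i<j. E (Q!i) y" if "y \<in> B" for y
  proof -
    have "y \<in> NS S" "y \<notin> S" using bd_NS[OF rS] that B_def by auto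
    then obtain s where "s \<in> S" "E s y" unfolding NS_def by blast
    then show ?thesis unfolding S_def j_def by (auto simp: in_set_conv_nth)
  qed
  have BnS: "y \<notin> S" if "y \<in> B" for y using bd_NS[OF rS] that B_def by auto
  have BNS: "B \<subseteq> NS S" using bd_NS[OF rS] B_def by auto
  have BC: "\<exists>x\<in>C. E x y" if "y \<in> B" for y using that B_def C_def bd_def by auto
  have BV: "y \<in> V" if "y \<in> B" for y using BC[OF that] inV by blast
  have Bne: "B \<noteq> {}" using bd_ne[OF rS, of "Q!0"] Q S_def B_def by (cases Q) auto
  have CNS: "x \<notin> NS S" if "x \<in> C" for x using comp_out[OF rS] that C_def by blast
  define priv where "priv y \<longleftrightarrow> y \<in> B \<and> E (Q!(j-1)) y \<and> (\<forall>i<j-1. \<not> E (Q!i) y)" for y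
  have mk: "good c r (enc Q')" if Q': "Q' \<noteq> []" "length Q' \<le> k" "ipath Q'" "set Q' \<subseteq> V"
     "cop_step E c (enc Q')" "B \<subseteq> NS (set Q')"
     and dec: "\<And>r'. r' = r \<or> E r r' \<Longrightarrow> r' \<notin> NS (set Q') \<Longrightarrow>
          (k+1) * card (comp (set Q') r') + length Q' < (k+1) * card C + j" for Q'
  proof -
    have se: "set (enc Q') = set Q'" using set_enc Q' by simp
    have cq: "card (set Q') = length Q'" using Q' ipath_def distinct_card by blast
    show ?thesis unfolding good_def
    proof (intro conjI allI impI)
      show "cop_step E c (enc Q')" by fact
      fix r' assume r': "r' = r \<or> E r r'" "r' \<notin> NS (set (enc Q'))"
      have "r' \<in> V" using r' Q inV by blast
      then show "Inv (enc Q') r'" unfolding Inv_def using Q' r' se by auto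
      show "mu (enc Q') r' < mu c r" unfolding mu_def using dec[of r'] r' se cq setc cardS C_def by simp
    qed
  qed
  have lastQ: "last Q = Q ! (j - 1)" using Q j_def by (simp add: last_conv_nth)
  have cases3: "(\<exists>b. priv b \<and> j < k) \<or> (\<not>(\<exists>b. priv b) \<and> j \<ge> 2) \<or> (\<exists>b. priv b \<and> j = k)"
  proof -
    have "\<exists>b. priv b" if "j < 2"
    proof -
      obtain y where y: "y \<in> B" using Bne by blast
      have j1': "j = 1" using that j1 by simp
      then have "E (Q!0) y" using Badj[OF y] by auto
      then have "priv y" using y j1' priv_def by simp
      then show ?thesis by blast
    qed
    then show ?thesis using jk by (cases "\<exists>b. priv b"; cases "j < k"; cases "j < 2") auto
  qed
  from cases3 show ?thesis
  proof (elim disjE)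
    assume "\<exists>b. priv b \<and> j < k"
    then obtain b where b: "priv b" "j < k" by blast
    define Q' where "Q' = Q @ [b]"
    have bB: "b \<in> B" using b priv_def by simp
    have ip: "ipath Q'" unfolding Q'_def
      by (rule ipath_snoc) (use Q bB BnS S_def lastQ b priv_def j_def in auto)
    have lq': "length Q' = Suc j" by (simp add: Q'_def j_def)
    have cs: "cop_step E c (enc Q')"
      unfolding cop_step_def
    proof (intro conjI allI impI)
      show "length (enc Q') = length c" using lenc by (simp add: enc_def)
      fix i assume i: "i < length c"
      have e: "enc Q' ! i = Q' ! min i j" using i lenc lq' by (simp add: enc_def)
      show "enc Q' ! i = c ! i \<or> E (c ! i) (enc Q' ! i)"
      proof (cases "i < j")
        case True then show ?thesis using e cnth[of i] i lenc by (simp add: Q'_def nth_append j_def)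
      next
        case False then show ?thesis using e cnth[of i] i lenc b priv_def by (simp add: Q'_def nth_append j_def)
      qed
    qed
    obtain x where x: "x \<in> C" "E x b" using BC bB by blast
    have bQ': "b \<in> set Q'" by (simp add: Q'_def)
    have xN: "x \<in> NS (set Q')" using sym[OF x(2)] bQ' unfolding NS_def by blast
    have SQ': "S \<subseteq> set Q'" using S_def Q'_def by auto
    have Bs: "B \<subseteq> NS (set Q')" using BNS NS_mono[OF SQ'] by (rule subset_trans)
    have ne: "Q' \<noteq> []" by (simp add: Q'_def)
    have lk: "length Q' \<le> k" using lq' b by simp
    have QV: "set Q' \<subseteq> V" using Q(4) BV[OF bB] by (simp add: Q'_def)
    have dec: "(k+1) * card (comp (set Q') r') + length Q' < (k+1) * card C + j"
      if r': "r' = r \<or> E r r'" "r' \<notin> NS (set Q')" for r'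
    proof -
      have BS': "bd S r \<subseteq> NS (set Q')" using Bs B_def by simp
      have xC: "x \<in> comp S r" using x C_def by simp
      have "comp (set Q') r' \<subset> comp S r" using comp_psub[OF rS BS' r'(1) r'(2) xC xN] .
      then have "comp (set Q') r' \<subset> C" using C_def by simp
      then have "card (comp (set Q') r') < card C" by (rule psubset_card_mono[OF finC])
      then have "Suc (card (comp (set Q') r')) \<le> card C" by simp
      moreover have "length Q' \<le> j + 1" using lq' by simp
      ultimately show ?thesis by (rule arith1[OF _ k1])
    qed
    show ?thesis using mk[OF ne lk ip QV cs Bs dec] by blast
  next
    assume h: "\<not>(\<exists>b. priv b) \<and> j \<ge> 2"
    have h2: "j \<ge> 2" using h by simp
    define Q' where "Q' = take (j - 1) Q"
    have ip: "ipath Q'" unfolding Q'_def using ipath_take Q by blast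
    have lq': "length Q' = j - 1" using j_def by (simp add: Q'_def)
    have cs: "cop_step E c (enc Q')"
      unfolding cop_step_def
    proof (intro conjI allI impI)
      show "length (enc Q') = length c" using lenc by (simp add: enc_def)
      fix i assume i: "i < length c"
      have m: "min i (j - 2) < j - 1" using h min.cobounded2[of i "j - 2"] by linarith
      have e0: "enc Q' ! i = Q' ! min i (length Q' - 1)" using i lenc by (simp add: enc_def)
      have "length Q' - 1 = j - 2" using lq' by simp
      then have e1: "enc Q' ! i = Q' ! min i (j - 2)" using e0 by simp
      have e: "enc Q' ! i = Q ! min i (j - 2)" using e1 m by (simp add: Q'_def)
      show "enc Q' ! i = c ! i \<or> E (c ! i) (enc Q' ! i)"
      proof (cases "i < j - 1")
        case True then have "min i (j - 2) = i" "min i (j - 1) = i" using h by auto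
        then show ?thesis using e cnth[of i] i lenc by simp
      next
        case False
        have "Suc (j - 2) < j" using h by linarith
        then have E0: "E (Q ! (j - 2)) (Q ! Suc (j - 2))" by (rule Qadj)
        have "Suc (j - 2) = j - 1" using h by linarith
        then have E1: "E (Q ! (j - 1)) (Q ! (j - 2))" using sym[OF E0] by simp
        have "min i (j - 2) = j - 2" "min i (j - 1) = j - 1" using False h2 by auto
        then show ?thesis using e cnth[of i] i lenc E1 by simp
      qed
    qed
    have Bs: "B \<subseteq> NS (set Q')"
    proof
      fix y assume y: "y \<in> B"
      obtain i where i: "i < j" "E (Q!i) y" using Badj[OF y] by blast
      have "\<exists>i<j-1. E (Q!i) y"
      proof (cases "i < j - 1")
        case True then show ?thesis using i by blast
      next
        case False then have "i = j - 1" using i by simp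
        then show ?thesis using h y i priv_def by blast
      qed
      then obtain i' where "i' < j - 1" "E (Q!i') y" by blast
      moreover have "Q!i' \<in> set Q'"
      proof -
        have "i' < length Q'" using \<open>i' < j - 1\<close> lq' by simp
        then have "Q' ! i' \<in> set Q'" by (rule nth_mem)
        moreover have "Q' ! i' = Q ! i'" using \<open>i' < j - 1\<close> Q'_def by simp
        ultimately show ?thesis by simp
      qed
      ultimately show "y \<in> NS (set Q')" unfolding NS_def by blast
    qed
    have ne: "Q' \<noteq> []" using h j_def Q'_def by (cases Q) auto
    have lk: "length Q' \<le> k" using lq' jk by simp
    have QV: "set Q' \<subseteq> V" using Q(4) set_take_subset[of "j - 1" Q] Q'_def by blast
    have dec: "(k+1) * card (comp (set Q') r') + length Q' < (k+1) * card C + j"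
      if r': "r' = r \<or> E r r'" "r' \<notin> NS (set Q')" for r'
    proof -
      have BS': "bd S r \<subseteq> NS (set Q')" using Bs B_def by simp
      have "comp (set Q') r' \<subseteq> comp S r" using comp_sub[OF rS BS' r'(1) r'(2)] .
      then have "comp (set Q') r' \<subseteq> C" using C_def by simp
      then have "card (comp (set Q') r') \<le> card C" by (rule card_mono[OF finC])
      moreover have "length Q' < j" using lq' h by simp
      ultimately show ?thesis by (rule arith2)
    qed
    show ?thesis using mk[OF ne lk ip QV cs Bs dec] by blast
  next
    assume "\<exists>b. priv b \<and> j = k"
    then obtain b where b: "priv b" "j = k" by blast
    define Q' where "Q' = tl Q @ [b]"
    have bB: "b \<in> B" using b priv_def by simp
    have bQ: "b \<notin> set (tl Q)" using BnS[OF bB] S_def Q by (cases Q) auto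
    have ip: "ipath Q'" unfolding Q'_def
    proof (rule ipath_snoc)
      show "ipath (tl Q)" using ipath_tl Q by blast
      show "b \<notin> set (tl Q)" by fact
      show "tl Q \<noteq> [] \<longrightarrow> E (last (tl Q)) b" using last_tl[of Q] lastQ b priv_def by auto
      fix i assume "Suc i < length (tl Q)"
      then show "\<not> E (tl Q ! i) b" using b priv_def j_def by (simp add: nth_tl)
    qed
    have lq': "length Q' = k" using b j_def j1 by (simp add: Q'_def)
    have cs: "cop_step E c (enc Q')"
      unfolding cop_step_def
    proof (intro conjI allI impI)
      show "length (enc Q') = length c" using lenc by (simp add: enc_def)
      fix i assume i: "i < length c"
      have mi: "min i (k - 1) = i" using i lenc by simp
      have e: "enc Q' ! i = Q' ! i" using i lenc lq' mi by (simp add: enc_def)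
      have ci: "c ! i = Q ! i" using i lenc cnth[of i] b mi by simp
      show "enc Q' ! i = c ! i \<or> E (c ! i) (enc Q' ! i)"
      proof (cases "i < k - 1")
        case True
        then have "Q' ! i = Q ! Suc i" using j_def b by (simp add: Q'_def nth_append nth_tl)
        then show ?thesis using e ci Qadj[of i] True b by simp
      next
        case False
        then have "i = k - 1" using i lenc by simp
        then have "Q' ! i = b" using j_def b by (simp add: Q'_def nth_append)
        then show ?thesis using e ci b priv_def \<open>i = k - 1\<close> by simp
      qed
    qed
    have Bs: "B \<subseteq> NS (set Q')"
    proof
      fix y assume y: "y \<in> B"
      show "y \<in> NS (set Q')"
      proof (cases "\<exists>i. 0 < i \<and> i < j \<and> E (Q!i) y")
        case True
        then obtain i where i: "0 < i" "i < j" "E (Q!i) y" by blast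
        have il: "i - 1 < length (tl Q)" using i j_def by simp
        then have "tl Q ! (i - 1) \<in> set (tl Q)" by (rule nth_mem)
        moreover have "tl Q ! (i - 1) = Q ! i" using il i by (simp add: nth_tl)
        ultimately have "Q ! i \<in> set Q'" using Q'_def by simp
        then show ?thesis using i unfolding NS_def by blast
      next
        case False
        have y02: "\<And>i. 0 < i \<Longrightarrow> i < j \<Longrightarrow> \<not> E (Q!i) y" using False by blast
        obtain i0 where i0: "i0 < j" "E (Q!i0) y" using Badj[OF y] by blast
        then have "i0 = 0" using y02 by (cases "i0 = 0") auto
        then have y0: "E (Q!0) y" "\<And>i. 0 < i \<Longrightarrow> i < j \<Longrightarrow> \<not> E (Q!i) y" using i0 y02 by auto
        have "y = b \<or> E b y"
        proof (rule ccontr)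
          assume nby: "\<not> (y = b \<or> E b y)"
          obtain x1 where x1: "x1 \<in> C" "E x1 b" using BC bB by blast
          obtain x2 where x2: "x2 \<in> C" "E x2 y" using BC y by blast
          have symR: "conversep (Rs S) = Rs S" unfolding Rs_def fun_eq_iff conversep_iff using sym by blast
          have "(Rs S)\<^sup>*\<^sup>* r x1" "(Rs S)\<^sup>*\<^sup>* r x2" using x1 x2 C_def comp_def by auto
          have "(conversep (Rs S))\<^sup>*\<^sup>* x1 r" using \<open>(Rs S)\<^sup>*\<^sup>* r x1\<close> by (rule rtranclp_converseI)
          then have "(Rs S)\<^sup>*\<^sup>* x1 r" using symR by simp
          then have "(Rs S)\<^sup>*\<^sup>* x1 x2" using \<open>(Rs S)\<^sup>*\<^sup>* r x2\<close> by (rule rtranclp_trans)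
          then have "(\<lambda>u v. E u v \<and> u \<notin> NS S \<and> v \<notin> NS S)\<^sup>*\<^sup>* x1 x2" by (simp add: Rs_def)
          from walk_exists[OF this CNS[OF x1(1)]] obtain w where
            w: "w \<noteq> []" "hd w = x1" "last w = x2" "successively E w" "set w \<inter> NS S = {}" by blast
          define W where "W = b # w @ [y]"
          have sW: "successively E W" unfolding W_def using w x1 x2 sym[OF x1(2)]
            by (auto simp: successively_Cons successively_append_iff)
          have setW: "set W \<subseteq> (- NS S) \<union> {b, y}" using w W_def by auto
          obtain P where P: "ipath P" "hd P = b" "last P = y" "length P \<ge> 3"
            "set P \<subseteq> (- NS S) \<union> {b,y}" "\<And>a. 0 < a \<Longrightarrow> a < length P - 1 \<Longrightarrow> P!a \<in> - NS S"
            using short_path[OF sW _ _ _ setW] nby W_def by auto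
          have P0: "P ! 0 = b" using P by (cases P) auto
          have PL: "P ! (length P - 1) = y" using P by (cases P) (auto simp: last_conv_nth)
          have Pe: "E (P!a) (P!Suc a)" if "Suc a < length P" for a using P(1) that unfolding ipath_def by auto
          have PV: "set P \<subseteq> V"
          proof
            fix x assume "x \<in> set P"
            then obtain a where a: "a < length P" "P!a = x" by (auto simp: in_set_conv_nth)
            show "x \<in> V"
            proof (cases "Suc a < length P")
              case True then show ?thesis using Pe[of a] a inV by blast
            next
              case False
              then have "Suc (a - 1) < length P" "Suc (a - 1) = a" using a P(4) by auto
              then show ?thesis using Pe[of "a - 1"] a inV by metis
            qed
          qed
          have SNS: "S \<subseteq> NS S" unfolding NS_def by blast
          have dj: "set P \<inter> set Q = {}" using P(5) SNS BnS[OF bB] BnS[OF y] S_def by auto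
          have "hole V E (P @ Q)"
          proof (rule glue_hole[OF P(1) Q(3) dj P(4) Q(1) PV Q(4)])
            fix a cc assume a: "a < length P" and cc: "cc < length Q"
            show "E (P!a) (Q!cc) \<longleftrightarrow> ((a = length P - 1 \<and> cc = 0) \<or> (a = 0 \<and> cc = length Q - 1))"
            proof -
              consider "a = 0" | "a = length P - 1" | "0 < a" "a < length P - 1" using a by linarith
              then show ?thesis
              proof cases
                case 1
                have "E b (Q!cc) \<longleftrightarrow> cc = j - 1"
                  using b priv_def cc j_def symI[of b] by (cases "cc = j - 1") auto
                then show ?thesis using 1 P0 P(4) j_def by auto
              next
                case 2
                have "E y (Q!cc) \<longleftrightarrow> cc = 0"
                  using y0 cc j_def symI[of y] by (cases "cc = 0") auto
                then show ?thesis using 2 PL P(4) j_def by auto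
              next
                case 3
                have "P!a \<notin> NS S" using P(6) 3 by auto
                moreover have "Q!cc \<in> S" using cc S_def by simp
                ultimately have "\<not> E (P!a) (Q!cc)" using sym unfolding NS_def by blast
                then show ?thesis using 3 by auto
              qed
            qed
          qed
          then have "length (P @ Q) < k + 3" by (rule nohole)
          then show False using P(4) b j_def by simp
        qed
        then show ?thesis unfolding NS_def Q'_def by auto
      qed
    qed
    obtain x where x: "x \<in> C" "E x b" using BC bB by blast
    have bQ': "b \<in> set Q'" by (simp add: Q'_def)
    have xN: "x \<in> NS (set Q')" using sym[OF x(2)] bQ' unfolding NS_def by blast
    have ne: "Q' \<noteq> []" by (simp add: Q'_def)
    have lk: "length Q' \<le> k" using lq' by simp
    have "set (tl Q) \<subseteq> set Q" by (cases Q) auto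
    then have QV: "set Q' \<subseteq> V" using Q(4) BV[OF bB] by (auto simp: Q'_def)
    have dec: "(k+1) * card (comp (set Q') r') + length Q' < (k+1) * card C + j"
      if r': "r' = r \<or> E r r'" "r' \<notin> NS (set Q')" for r'
    proof -
      have BS': "bd S r \<subseteq> NS (set Q')" using Bs B_def by simp
      have xC: "x \<in> comp S r" using x C_def by simp
      have "comp (set Q') r' \<subset> comp S r" using comp_psub[OF rS BS' r'(1) r'(2) xC xN] .
      then have "comp (set Q') r' \<subset> C" using C_def by simp
      then have "card (comp (set Q') r') < card C" by (rule psubset_card_mono[OF finC])
      then have "Suc (card (comp (set Q') r')) \<le> card C" by simp
      moreover have "length Q' \<le> j + 1" using lq' b by simp
      ultimately show ?thesis by (rule arith1[OF _ k1])
    qed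
    show ?thesis using mk[OF ne lk ip QV cs Bs dec] by blast
  qed
qed

lemma cop_step_refl: "cop_step E c c" unfolding cop_step_def by simp

lemma capture_exists:
  assumes "r \<in> NS (set c)" shows "\<exists>c'. cop_step E c c' \<and> r \<in> set c'"
proof (cases "r \<in> set c")
  case True then show ?thesis using cop_step_refl by blast
next
  case False
  then obtain s where s: "s \<in> set c" "E s r" using assms NS_def by blast
  then obtain i where i: "i < length c" "c ! i = s" by (auto simp: in_set_conv_nth)
  have "cop_step E c (c[i := r])" unfolding cop_step_def using i s by (auto simp: nth_list_update)
  moreover have "r \<in> set (c[i := r])" using i by (simp add: set_update_memI)
  ultimately show ?thesis by blast
qed

definition stepf :: "'a list \<Rightarrow> 'a \<Rightarrow> 'a list" where
  "stepf c r = (if r \<in> NS (set c) then (SOME c'. cop_step E c c' \<and> r \<in> set c')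
     else if (\<exists>c'. good c r c') then (SOME c'. good c r c') else c)"

lemma stepf_legal: "cop_step E c (stepf c r)"
proof -
  consider "r \<in> NS (set c)" | "r \<notin> NS (set c)" "\<exists>c'. good c r c'" | "r \<notin> NS (set c)" "\<not> (\<exists>c'. good c r c')"
    by blast
  then show ?thesis
  proof cases
    case 1
    have "cop_step E c (SOME c'. cop_step E c c' \<and> r \<in> set c') \<and> r \<in> set (SOME c'. cop_step E c c' \<and> r \<in> set c')"
      by (rule someI_ex[OF capture_exists[OF 1]])
    then show ?thesis using 1 by (simp add: stepf_def)
  next
    case 2
    have "good c r (SOME c'. good c r c')" by (rule someI_ex[OF 2(2)])
    then have g: "cop_step E c (SOME c'. good c r c')" unfolding good_def by blast
    have st: "stepf c r = (SOME c'. good c r c')" using 2 unfolding stepf_def by simp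
    show ?thesis using g st by simp
  next
    case 3
    then have "stepf c r = c" unfolding stepf_def by auto
    then show ?thesis by (simp add: cop_step_refl)
  qed
qed

lemma stepf_capture: "r \<in> NS (set c) \<Longrightarrow> r \<in> set (stepf c r)"
proof -
  assume a: "r \<in> NS (set c)"
  have "cop_step E c (SOME c'. cop_step E c c' \<and> r \<in> set c') \<and> r \<in> set (SOME c'. cop_step E c c' \<and> r \<in> set c')"
    by (rule someI_ex[OF capture_exists[OF a]])
  then show ?thesis using a by (simp add: stepf_def)
qed

lemma stepf_good: "Inv c r \<Longrightarrow> good c r (stepf c r)"
proof -
  assume a: "Inv c r"
  then have nr: "r \<notin> NS (set c)" unfolding Inv_def using set_enc by auto
  have ex: "\<exists>c'. good c r c'" using key[OF a] .
  have "good c r (SOME c'. good c r c')" by (rule someI_ex[OF ex])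
  then show ?thesis using nr ex by (simp add: stepf_def)
qed

theorem win: "cops_win V E k"
proof -
  obtain v where v: "v \<in> V" using fsg unfolding finite_simple_graph_def by blast
  define C0 where "C0 = replicate k v"
  define f where "f = (\<lambda>h rs. stepf (last h) (last (rs::'a list)))"
  have sC0: "set C0 = {v}" using k1 C0_def by simp
  show ?thesis unfolding cops_win_def
  proof (rule exI[of _ C0], rule exI[of _ f], intro conjI allI impI)
    show "length C0 = k" by (simp add: C0_def)
    show "set C0 \<subseteq> V" using sC0 v by simp
    fix R assume rw: "robber_walk V E R"
    define c where "c = cop_pos C0 f R"
    have cS: "c (Suc n) = stepf (c n) (R n)" for n
      unfolding c_def f_def by (simp add: cop_pos_Suc last_hist)
    have c0: "c 0 = C0" unfolding c_def by (simp add: cop_pos_def)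
    show "cop_step E (cop_pos C0 f R n) (cop_pos C0 f R (Suc n))" for n
      using cS[of n] stepf_legal c_def by simp
    show "\<exists>n. R n \<in> set (cop_pos C0 f R n) \<or> R n \<in> set (cop_pos C0 f R (Suc n))"
    proof (rule ccontr)
      assume H: "\<not> ?thesis"
      have cap: "R n \<notin> NS (set (c n))" for n
      proof
        assume "R n \<in> NS (set (c n))"
        then have "R n \<in> set (c (Suc n))" using cS stepf_capture by simp
        then show False using H c_def by blast
      qed
      have rV: "R n \<in> V" for n
      proof (induction n)
        case 0 then show ?case using rw unfolding robber_walk_def by simp
      next
        case (Suc n)
        have "R (Suc n) = R n \<or> E (R n) (R (Suc n))" using rw unfolding robber_walk_def by blast
        then show ?case using Suc inV by metis
      qed
      have inv: "Inv (c n) (R n) \<and> mu (c n) (R n) + n \<le> mu (c 0) (R 0)" for n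
      proof (induction n)
        case 0
        have "enc [v] = C0" unfolding enc_def C0_def by (simp add: map_replicate_const)
        moreover have "ipath [v]" unfolding ipath_def using irr by simp
        ultimately have "Inv (c 0) (R 0)" unfolding Inv_def using c0 v k1 rV[of 0] cap[of 0] sC0
          by (intro exI[of _ "[v]"]) auto
        then show ?case by simp
      next
        case (Suc n)
        then have g: "good (c n) (R n) (c (Suc n))" using cS stepf_good by simp
        have "R (Suc n) = R n \<or> E (R n) (R (Suc n))" using rw unfolding robber_walk_def by blast
        then have "Inv (c (Suc n)) (R (Suc n)) \<and> mu (c (Suc n)) (R (Suc n)) < mu (c n) (R n)"
          using g cap[of "Suc n"] unfolding good_def by blast
        then show ?case using Suc by simp
      qed
      then show False using inv[of "Suc (mu (c 0) (R 0))"] by simp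
    qed
  qed
qed

end

theorem mainTheorem1:
  fixes V :: "'a set" and E :: "'a \<Rightarrow> 'a \<Rightarrow> bool" and t :: nat
  assumes "t \<ge> 4"
    and "finite_simple_graph V E"
    and "connected_graph V E"
    and "\<not> (\<exists>vs. hole V E vs \<and> length vs \<ge> t)"
  shows "cops_win V E (t - 3) \<and> cop_number V E \<le> t - 3"
proof -
  have k: "1 \<le> t - 3" using assms(1) by simp
  have nh: "length vs < t - 3 + 3" if "hole V E vs" for vs
  proof -
    have "\<not> length vs \<ge> t" using assms(4) that by blast
    then show ?thesis using assms(1) by simp
  qed
  interpret G: grph V E "t - 3"
    using assms(2,3) k nh by unfold_locales auto
  have w: "cops_win V E (t - 3)" by (rule G.win)
  moreover have "cop_number V E \<le> t - 3" unfolding cop_number_def by (rule Least_le) (rule w)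
  ultimately show ?thesis by simp
qed

end
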